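(* For every integer $k \ge 1$ and all $\alpha > 0$ and $\lambda > 0$, there exists $\tau > 0$ such that the following holds. Let $V_1,\dots,V_k$ be finite sets and let $d$ be an integer with $2 \le d \le \min\{|V_1|,\dots,|V_k|\}$. Suppose that $\mathcal{H} \subseteq V_1 \times \dots \times V_k$ satisfies $|\mathcal{H}| \le \tau \prod_{i=1}^k |V_i|$, and let $W_1,\dots,W_k$ be independent uniformly chosen random $d$-element subsets of $V_1,\dots,V_k$, respectively. Then \[ \Pr\left(|\mathcal{H} \cap (W_1 \times \dots \times W_k)| > \lambda d^k\right) \le \alpha^d. \] *)

theory Defs
  imports "HOL-Probability.Probability"
begin

end

theory Submission imports Defs begin

lemma card_sup_subsets:
  assumes "finite V" "T \<subseteq> V" "card T = m" "m \<le> d"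
  shows "card {W. W \<subseteq> V \<and> card W = d \<and> T \<subseteq> W} = (card V - m) choose (d - m)"
proof -
  have fT: "finite T" using assms finite_subset by blast
  have "bij_betw (\<lambda>W. W - T) {W. W \<subseteq> V \<and> card W = d \<and> T \<subseteq> W} {B. B \<subseteq> V - T \<and> card B = d - m}"
  proof (rule bij_betw_byWitness[where f'="\<lambda>B. B \<union> T"])
    show "\<forall>a\<in>{W. W \<subseteq> V \<and> card W = d \<and> T \<subseteq> W}. (a - T) \<union> T = a" by auto
    show "\<forall>a'\<in>{B. B \<subseteq> V - T \<and> card B = d - m}. a' \<union> T - T = a'" by auto
    show "(\<lambda>W. W - T) ` {W. W \<subseteq> V \<and> card W = d \<and> T \<subseteq> W} \<subseteq> {B. B \<subseteq> V - T \<and> card B = d - m}"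
      using assms fT by (auto simp: card_Diff_subset)
    show "(\<lambda>B. B \<union> T) ` {B. B \<subseteq> V - T \<and> card B = d - m} \<subseteq> {W. W \<subseteq> V \<and> card W = d \<and> T \<subseteq> W}"
    proof safe
      fix B assume B: "B \<subseteq> V - T" "card B = d - m"
      then have "finite B" using assms finite_subset by blast
      moreover have "B \<inter> T = {}" using B by auto
      ultimately show "card (B \<union> T) = d" using B assms fT by (simp add: card_Un_disjoint)
    qed (use assms in auto)
  qed
  then have "card {W. W \<subseteq> V \<and> card W = d \<and> T \<subseteq> W} = card {B. B \<subseteq> V - T \<and> card B = d - m}"
    by (rule bij_betw_same_card)
  also have "\<dots> = card (V - T) choose (d - m)" using assms by (simp add: n_subsets)
  also have "card (V - T) = card V - m" using assms fT by (simp add: card_Diff_subset)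
  finally show ?thesis .
qed

lemma double_count:
  assumes "finite V" "A \<subseteq> V" "m \<le> d"
  shows "(\<Sum>W\<in>{W. W \<subseteq> V \<and> card W = d}. (card (A \<inter> W) choose m))
         = (card A choose m) * ((card V - m) choose (d - m))"
proof -
  define S where "S = {W. W \<subseteq> V \<and> card W = d}"
  define TT where "TT = {T. T \<subseteq> A \<and> card T = m}"
  have fA: "finite A" using assms finite_subset by blast
  have fS: "finite S" unfolding S_def using assms by (auto intro: finite_subset[of _ "Pow V"])
  have fTT: "finite TT" unfolding TT_def using fA by (auto intro: finite_subset[of _ "Pow A"])
  have "(\<Sum>W\<in>S. (card (A \<inter> W) choose m)) = (\<Sum>W\<in>S. \<Sum>T\<in>TT. if T \<subseteq> W then 1 else 0)"
  proof (rule sum.cong[OF refl])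
    fix W assume "W \<in> S"
    have "card (A \<inter> W) choose m = card {T. T \<subseteq> A \<inter> W \<and> card T = m}"
      using n_subsets[of "A \<inter> W" m] fA by simp
    also have "{T. T \<subseteq> A \<inter> W \<and> card T = m} = {T\<in>TT. T \<subseteq> W}" unfolding TT_def by auto
    also have "card \<dots> = (\<Sum>T\<in>TT. if T \<subseteq> W then 1 else 0)"
      using sum.inter_filter[OF fTT, of "\<lambda>_. 1::nat" "\<lambda>T. T \<subseteq> W"] by simp
    finally show "card (A \<inter> W) choose m = (\<Sum>T\<in>TT. if T \<subseteq> W then 1 else 0)" .
  qed
  also have "\<dots> = (\<Sum>T\<in>TT. \<Sum>W\<in>S. if T \<subseteq> W then 1 else 0)" by (rule sum.swap)
  also have "\<dots> = (\<Sum>T\<in>TT. (card V - m) choose (d - m))"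
  proof (rule sum.cong[OF refl])
    fix T assume T: "T \<in> TT"
    have "(\<Sum>W\<in>S. if T \<subseteq> W then 1 else 0) = (\<Sum>W\<in>{W\<in>S. T \<subseteq> W}. 1::nat)"
      using sum.inter_filter[OF fS, of "\<lambda>_. 1::nat" "\<lambda>W. T \<subseteq> W"] by simp
    also have "\<dots> = card {W. W \<subseteq> V \<and> card W = d \<and> T \<subseteq> W}" unfolding S_def
      by (simp add: conj_assoc)
    also have "\<dots> = (card V - m) choose (d - m)"
      using T assms unfolding TT_def by (intro card_sup_subsets) auto
    finally show "(\<Sum>W\<in>S. if T \<subseteq> W then 1 else 0) = (card V - m) choose (d - m)" .
  qed
  also have "\<dots> = (card A choose m) * ((card V - m) choose (d - m))"
    using fA by (simp add: TT_def n_subsets)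
  finally show ?thesis unfolding S_def .
qed

lemma choose_ratio:
  assumes "a \<le> n"
  shows "real (a choose m) * real n ^ m \<le> real (n choose m) * real a ^ m"
proof (cases "m \<le> a")
  case False
  then have "a choose m = 0" by simp
  then show ?thesis by (simp del: binomial_eq_0_iff)
next
  case True
  have ea: "fact m * real (a choose m) = (\<Prod>i=0..<m. real a - real i)"
    by (simp add: binomial_gbinomial gbinomial_mult_fact)
  have en: "fact m * real (n choose m) = (\<Prod>i=0..<m. real n - real i)"
    by (simp add: binomial_gbinomial gbinomial_mult_fact)
  have "fact m * (real (a choose m) * real n ^ m) = (\<Prod>i=0..<m. (real a - real i) * real n)"
    by (simp add: ea[symmetric] prod.distrib mult.assoc)
  also have "\<dots> \<le> (\<Prod>i=0..<m. (real n - real i) * real a)"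
  proof (rule prod_mono)
    fix i assume "i \<in> {0..<m}"
    then have "i < m" by simp
    show "0 \<le> (real a - real i) * real n \<and> (real a - real i) * real n \<le> (real n - real i) * real a"
    proof
      show "0 \<le> (real a - real i) * real n" using \<open>i < m\<close> True by simp
      have "real a * real i \<le> real n * real i" using assms by (intro mult_right_mono) auto
      then show "(real a - real i) * real n \<le> (real n - real i) * real a"
        by (simp add: algebra_simps)
    qed
  qed
  also have "\<dots> = fact m * (real (n choose m) * real a ^ m)"
    by (simp add: en[symmetric] prod.distrib mult.assoc)
  finally show ?thesis by simp
qed

lemma prob_hit:
  assumes "finite V" "A \<subseteq> V" "1 \<le> d" "d \<le> card V"
  shows "measure_pmf.prob (pmf_of_set {S. S \<subseteq> V \<and> card S = d}) {W. m \<le> card (A \<inter> W)}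
         \<le> real (d choose m) * (real (card A) / real (card V)) ^ m"
proof -
  define S where "S = {S. S \<subseteq> V \<and> card S = d}"
  define E where "E = {W. m \<le> card (A \<inter> W)}"
  define n where "n = card V"
  define a where "a = card A"
  have fS: "finite S" unfolding S_def using assms by (auto intro: finite_subset[of _ "Pow V"])
  have cS: "card S = n choose d" unfolding S_def n_def using assms by (simp add: n_subsets)
  have Sne: "S \<noteq> {}" using cS assms n_def by auto
  have an: "a \<le> n" unfolding a_def n_def using assms card_mono by blast
  have prob: "measure_pmf.prob (pmf_of_set S) E = real (card (S \<inter> E)) / real (card S)"
    using fS Sne by (simp add: measure_pmf_of_set)
  show ?thesis
  proof (cases "m \<le> d")
    case False
    have "S \<inter> E = {}"
    proof safe
      fix W assume "W \<in> S" "W \<in> E"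
      then have "card (A \<inter> W) \<le> card W" "card W = d" "finite W"
        unfolding S_def using assms finite_subset by (auto intro: card_mono)
      then show "W \<in> {}" using \<open>W \<in> E\<close> False unfolding E_def by auto
    qed
    then show ?thesis using prob False unfolding S_def E_def by simp
  next
    case True
    have "card (S \<inter> E) = (\<Sum>W\<in>S \<inter> E. 1)" by simp
    also have "\<dots> \<le> (\<Sum>W\<in>S \<inter> E. card (A \<inter> W) choose m)"
      by (rule sum_mono) (auto simp: E_def Suc_le_eq)
    also have "\<dots> \<le> (\<Sum>W\<in>S. card (A \<inter> W) choose m)"
      by (rule sum_mono2) (use fS in auto)
    also have "\<dots> = (a choose m) * ((n - m) choose (d - m))"
      unfolding S_def a_def n_def using assms True by (intro double_count) auto
    finally have c1: "real (card (S \<inter> E)) \<le> real (a choose m) * real ((n - m) choose (d - m))"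
      by (metis of_nat_le_iff of_nat_mult)
    have cm: "(n choose d) * (d choose m) = (n choose m) * ((n - m) choose (d - m))"
      using True assms n_def by (intro choose_mult) auto
    have pos1: "real (n choose d) > 0" "real (n choose m) > 0" using True assms n_def by auto
    have npos: "real n > 0" using assms n_def by auto
    have "measure_pmf.prob (pmf_of_set S) E \<le> real (a choose m) * real ((n - m) choose (d - m)) / real (n choose d)"
      using prob c1 cS pos1 by (simp add: divide_right_mono)
    also have "\<dots> = real (a choose m) * real (d choose m) / real (n choose m)"
    proof -
      have "real (n choose d) * real (d choose m) = real (n choose m) * real ((n - m) choose (d - m))"
        using cm by (metis of_nat_mult)
      then show ?thesis using pos1 by (simp add: field_simps)
    qed
    also have "\<dots> \<le> real (d choose m) * (real a / real n) ^ m"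
    proof -
      have "real (a choose m) * real n ^ m \<le> real (n choose m) * real a ^ m"
        using an by (rule choose_ratio)
      then have "real (a choose m) / real (n choose m) \<le> (real a / real n) ^ m"
        using pos1 npos by (simp add: field_simps power_divide)
      then show ?thesis using pos1
        by (metis mult.commute mult_left_mono of_nat_0_le_iff times_divide_eq_right)
    qed
    finally show ?thesis unfolding S_def E_def a_def n_def .
  qed
qed

lemma L1:
  assumes "\<alpha> > 0" "lam > 0"
  shows "\<exists>\<tau>>0. \<forall>(V::nat set) (d::nat) (s :: nat \<Rightarrow> real).
     finite V \<and> 1 \<le> d \<and> d \<le> card V \<and> (\<forall>v. 0 \<le> s v \<and> s v \<le> 1) \<and>
     (\<Sum>v\<in>V. s v) \<le> \<tau> * real (card V) \<longrightarrow>
     measure_pmf.prob (pmf_of_set {S. S \<subseteq> V \<and> card S = d}) {W. (\<Sum>v\<in>W. s v) > lam * real d} \<le> \<alpha> ^ d"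
proof -
  define \<beta> where "\<beta> = min (\<alpha>/2) (1/2)"
  define r where "r = nat \<lceil>2/lam\<rceil> + 1"
  define t where "t = \<beta> ^ r"
  have b0: "\<beta> > 0" "\<beta> \<le> 1" "2 * \<beta> \<le> \<alpha>" using assms unfolding \<beta>_def by auto
  have r1: "r \<ge> 1" and r2: "real r \<ge> 2 / lam" unfolding r_def by auto linarith
  have t0: "t > 0" unfolding t_def using b0 by simp
  show ?thesis
  proof (rule exI[of _ "t * lam / 2"], intro conjI allI impI)
    show "t * lam / 2 > 0" using t0 assms by simp
    fix V :: "nat set" and d :: nat and s :: "nat \<Rightarrow> real"
    assume H: "finite V \<and> 1 \<le> d \<and> d \<le> card V \<and> (\<forall>v. 0 \<le> s v \<and> s v \<le> 1) \<and>
               (\<Sum>v\<in>V. s v) \<le> t * lam / 2 * real (card V)"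
    then have fV: "finite V" and d1: "1 \<le> d" and dV: "d \<le> card V" and s01: "\<And>v. 0 \<le> s v" "\<And>v. s v \<le> 1"
      and ssum: "(\<Sum>v\<in>V. s v) \<le> t * lam / 2 * real (card V)" by auto
    define S where "S = {S. S \<subseteq> V \<and> card S = d}"
    define A where "A = {v\<in>V. s v \<ge> lam / 2}"
    define m where "m = nat \<lceil>lam * real d / 2\<rceil>"
    have fS: "finite S" unfolding S_def using fV by (auto intro: finite_subset[of _ "Pow V"])
    have cS: "card S = card V choose d" unfolding S_def using fV by (simp add: n_subsets)
    have Sne: "S \<noteq> {}" using cS dV by auto
    have AV: "A \<subseteq> V" unfolding A_def by auto
    have fA: "finite A" using fV AV finite_subset by blast
    have nV: "real (card V) > 0" using d1 dV by simp
    have "real (card A) * (lam / 2) = (\<Sum>v\<in>A. lam / 2)" by simp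
    also have "\<dots> \<le> (\<Sum>v\<in>A. s v)" by (rule sum_mono) (auto simp: A_def)
    also have "\<dots> \<le> (\<Sum>v\<in>V. s v)" by (rule sum_mono2) (use fV AV s01 in auto)
    finally have "real (card A) * (lam / 2) \<le> t * real (card V) * (lam / 2)" using ssum by (simp add: algebra_simps)
    then have cA: "real (card A) / real (card V) \<le> t" using assms nV by (simp add: field_simps)
    have sub: "{W. (\<Sum>v\<in>W. s v) > lam * real d} \<inter> set_pmf (pmf_of_set S) \<subseteq> {W. m \<le> card (A \<inter> W)}"
    proof safe
      fix W assume W1: "(\<Sum>v\<in>W. s v) > lam * real d" and W2: "W \<in> set_pmf (pmf_of_set S)"
      then have WS: "W \<subseteq> V" "card W = d" using fS Sne unfolding S_def by auto
      then have fW: "finite W" using fV finite_subset by blast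
      have "(\<Sum>v\<in>W. s v) = (\<Sum>v\<in>W \<inter> A. s v) + (\<Sum>v\<in>W - A. s v)"
        using fW by (metis sum.Int_Diff)
      also have "(\<Sum>v\<in>W \<inter> A. s v) \<le> (\<Sum>v\<in>W \<inter> A. 1)" by (rule sum_mono) (use s01 in auto)
      also have "(\<Sum>v\<in>W - A. s v) \<le> (\<Sum>v\<in>W - A. lam / 2)"
        by (rule sum_mono) (use WS in \<open>auto simp: A_def\<close>)
      also have "(\<Sum>v\<in>W - A. lam / 2) = real (card (W - A)) * (lam / 2)" by simp
      also have "\<dots> \<le> real d * (lam / 2)"
      proof -
        have "card (W - A) \<le> card W" using fW by (intro card_mono) auto
        then show ?thesis using WS assms by (intro mult_right_mono) auto
      qed
      finally have "lam * real d < real (card (W \<inter> A)) + real d * (lam / 2)" using W1 by simp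
      then have "lam * real d / 2 < real (card (A \<inter> W))" by (simp add: Int_commute field_simps)
      then show "m \<le> card (A \<inter> W)" unfolding m_def by (simp add: nat_le_iff ceiling_le_iff)
    qed
    have "measure_pmf.prob (pmf_of_set S) {W. (\<Sum>v\<in>W. s v) > lam * real d}
        = measure_pmf.prob (pmf_of_set S) ({W. (\<Sum>v\<in>W. s v) > lam * real d} \<inter> set_pmf (pmf_of_set S))"
      by (simp add: measure_Int_set_pmf)
    also have "\<dots> \<le> measure_pmf.prob (pmf_of_set S) {W. m \<le> card (A \<inter> W)}"
      by (rule measure_pmf.finite_measure_mono[OF sub]) simp
    also have "\<dots> \<le> real (d choose m) * (real (card A) / real (card V)) ^ m"
      unfolding S_def using fV AV d1 dV by (rule prob_hit)
    also have "\<dots> \<le> real (d choose m) * t ^ m"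
      by (intro mult_left_mono power_mono cA) auto
    also have "\<dots> \<le> \<alpha> ^ d"
    proof (cases "m \<le> d")
      case False
      then have "d choose m = 0" by simp
      then show ?thesis using assms by (simp del: binomial_eq_0_iff)
    next
      case True
      have "real d \<le> real r * real m"
      proof -
        have "real m \<ge> lam * real d / 2" unfolding m_def by linarith
        then have "real r * real m \<ge> (2 / lam) * (lam * real d / 2)"
          using r2 assms by (intro mult_mono) auto
        then show ?thesis using assms by simp
      qed
      then have dr: "d \<le> r * m" by (metis of_nat_le_iff of_nat_mult)
      have "t ^ m = \<beta> ^ (r * m)" unfolding t_def by (simp add: power_mult)
      also have "\<dots> \<le> \<beta> ^ d" using b0 dr by (intro power_decreasing) auto
      finally have "real (d choose m) * t ^ m \<le> 2 ^ d * \<beta> ^ d"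
        using binomial_le_pow2[of d m] b0 t0
        by (intro mult_mono) (auto simp: of_nat_le_iff[symmetric])
      also have "\<dots> = (2 * \<beta>) ^ d" by (simp add: power_mult_distrib)
      also have "\<dots> \<le> \<alpha> ^ d" using b0 by (intro power_mono) auto
      finally show ?thesis .
    qed
    finally show "measure_pmf.prob (pmf_of_set {S. S \<subseteq> V \<and> card S = d}) {W. (\<Sum>v\<in>W. s v) > lam * real d} \<le> \<alpha> ^ d"
      unfolding S_def .
  qed
qed

lemma bind_bound:
  fixes p :: "'a pmf" and g :: "'a \<Rightarrow> 'b pmf"
  assumes "\<And>y. y \<in> set_pmf p \<Longrightarrow> y \<notin> B \<Longrightarrow> measure_pmf.prob (g y) E \<le> c" "0 \<le> c"
  shows "measure_pmf.prob (bind_pmf p g) E \<le> measure_pmf.prob p B + c"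
proof -
  have "emeasure (measure_pmf (bind_pmf p g)) E = (\<integral>\<^sup>+y. emeasure (measure_pmf (g y)) E \<partial>measure_pmf p)"
    by simp
  also have "\<dots> \<le> (\<integral>\<^sup>+y. (indicator B y + ennreal c) \<partial>measure_pmf p)"
  proof (rule nn_integral_mono_AE, rule AE_pmfI)
    fix y assume y: "y \<in> set_pmf p"
    show "emeasure (measure_pmf (g y)) E \<le> indicator B y + ennreal c"
    proof (cases "y \<in> B")
      case True
      have "emeasure (measure_pmf (g y)) E \<le> 1" by (simp add: measure_pmf.emeasure_le_1)
      then show ?thesis using True by (simp add: add_increasing2)
    next
      case False
      then have "emeasure (measure_pmf (g y)) E = ennreal (measure_pmf.prob (g y) E)"
        by (simp add: measure_pmf.emeasure_eq_measure)
      also have "\<dots> \<le> ennreal c" using assms(1)[OF y False] by (simp add: ennreal_leI)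
      finally show ?thesis using False by simp
    qed
  qed
  also have "\<dots> = emeasure (measure_pmf p) B + ennreal c"
    by (simp add: nn_integral_add measure_pmf.emeasure_space_1)
  also have "\<dots> = ennreal (measure_pmf.prob p B + c)"
    using assms(2) by (simp add: measure_pmf.emeasure_eq_measure ennreal_plus)
  finally have "ennreal (measure_pmf.prob (bind_pmf p g) E) \<le> ennreal (measure_pmf.prob p B + c)"
    by (simp only: measure_pmf.emeasure_eq_measure)
  then show ?thesis using assms(2) by (subst (asm) ennreal_le_iff) auto
qed

lemma sum_PiE_Suc:
  "(\<Sum>e\<in>PiE {..<Suc k} T. f e) = (\<Sum>v\<in>T k. \<Sum>e'\<in>PiE {..<k} T. f (e'(k:=v)))"
proof -
  have "PiE {..<Suc k} T = (\<lambda>(y, g). g(k := y)) ` (T k \<times> PiE {..<k} T)"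
    using PiE_insert_eq[of k "{..<k}" T] by (simp add: lessThan_Suc)
  then have "(\<Sum>e\<in>PiE {..<Suc k} T. f e) = (\<Sum>e\<in>T k \<times> PiE {..<k} T. f ((\<lambda>(y, g). g(k := y)) e))"
    using inj_combinator[of k "{..<k}" T] by (simp add: sum.reindex)
  also have "\<dots> = (\<Sum>v\<in>T k. \<Sum>e'\<in>PiE {..<k} T. f (e'(k:=v)))"
    by (simp add: sum.cartesian_product case_prod_unfold)
  finally show ?thesis .
qed

lemma G:
  "\<forall>\<alpha>>0. \<forall>lam>0. \<exists>\<tau>>0. \<forall>(V::nat\<Rightarrow>nat set) (d::nat) (f::(nat\<Rightarrow>nat)\<Rightarrow>real).
     (\<forall>i<k. finite (V i)) \<and> 1 \<le> d \<and> (\<forall>i<k. d \<le> card (V i)) \<and> (\<forall>e. 0 \<le> f e \<and> f e \<le> 1) \<and>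
     (\<Sum>e\<in>PiE {..<k} V. f e) \<le> \<tau> * (\<Prod>i<k. real (card (V i))) \<longrightarrow>
     measure_pmf.prob (Pi_pmf {..<k} {} (\<lambda>i. pmf_of_set {S. S \<subseteq> V i \<and> card S = d}))
       {W. (\<Sum>e\<in>PiE {..<k} W. f e) > lam * real d ^ k} \<le> \<alpha> ^ d"
proof (induction k)
  case 0
  show ?case
  proof (intro allI impI)
    fix \<alpha> lam :: real assume a: "\<alpha> > 0" "lam > 0"
    show "\<exists>\<tau>>0. \<forall>(V::nat\<Rightarrow>nat set) (d::nat) (f::(nat\<Rightarrow>nat)\<Rightarrow>real).
     (\<forall>i<0. finite (V i)) \<and> 1 \<le> d \<and> (\<forall>i<0. d \<le> card (V i)) \<and> (\<forall>e. 0 \<le> f e \<and> f e \<le> 1) \<and>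
     (\<Sum>e\<in>PiE {..<0} V. f e) \<le> \<tau> * (\<Prod>i<0. real (card (V i))) \<longrightarrow>
     measure_pmf.prob (Pi_pmf {..<0} {} (\<lambda>i. pmf_of_set {S. S \<subseteq> V i \<and> card S = d}))
       {W. (\<Sum>e\<in>PiE {..<0} W. f e) > lam * real d ^ 0} \<le> \<alpha> ^ d"
    proof (rule exI[of _ lam], intro conjI allI impI)
      show "lam > 0" by (rule a)
      fix V :: "nat\<Rightarrow>nat set" and d :: nat and f :: "(nat\<Rightarrow>nat)\<Rightarrow>real"
      assume H: "(\<forall>i<0. finite (V i)) \<and> 1 \<le> d \<and> (\<forall>i<0. d \<le> card (V i)) \<and> (\<forall>e. 0 \<le> f e \<and> f e \<le> 1) \<and>
     (\<Sum>e\<in>PiE {..<0} V. f e) \<le> lam * (\<Prod>i<0. real (card (V i)))"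
      then have "{W. (\<Sum>e\<in>PiE {..<0} W. f e) > lam * real d ^ 0} = {}" by auto
      then show "measure_pmf.prob (Pi_pmf {..<0} {} (\<lambda>i. pmf_of_set {S. S \<subseteq> V i \<and> card S = d}))
       {W. (\<Sum>e\<in>PiE {..<0} W. f e) > lam * real d ^ 0} \<le> \<alpha> ^ d" using a by simp
    qed
  qed
next
  case (Suc k)
  show ?case
  proof (intro allI impI)
    fix \<alpha> lam :: real assume a: "\<alpha> > 0" "lam > 0"
    from Suc.IH[rule_format, OF half_gt_zero[OF a(1)] a(2)] obtain \<tau>k where tk: "\<tau>k > 0"
      and IHk: "\<forall>(V::nat\<Rightarrow>nat set) (d::nat) (f::(nat\<Rightarrow>nat)\<Rightarrow>real).
     (\<forall>i<k. finite (V i)) \<and> 1 \<le> d \<and> (\<forall>i<k. d \<le> card (V i)) \<and> (\<forall>e. 0 \<le> f e \<and> f e \<le> 1) \<and>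
     (\<Sum>e\<in>PiE {..<k} V. f e) \<le> \<tau>k * (\<Prod>i<k. real (card (V i))) \<longrightarrow>
     measure_pmf.prob (Pi_pmf {..<k} {} (\<lambda>i. pmf_of_set {S. S \<subseteq> V i \<and> card S = d}))
       {W. (\<Sum>e\<in>PiE {..<k} W. f e) > lam * real d ^ k} \<le> (\<alpha>/2) ^ d"
      by blast
    from L1[OF half_gt_zero[OF a(1)] tk] obtain \<tau>1 where t1: "\<tau>1 > 0" and L: "\<forall>(V::nat set) (d::nat) (s :: nat \<Rightarrow> real).
     finite V \<and> 1 \<le> d \<and> d \<le> card V \<and> (\<forall>v. 0 \<le> s v \<and> s v \<le> 1) \<and>
     (\<Sum>v\<in>V. s v) \<le> \<tau>1 * real (card V) \<longrightarrow>
     measure_pmf.prob (pmf_of_set {S. S \<subseteq> V \<and> card S = d}) {W. (\<Sum>v\<in>W. s v) > \<tau>k * real d} \<le> (\<alpha>/2) ^ d"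
      by blast
    show "\<exists>\<tau>>0. \<forall>(V::nat\<Rightarrow>nat set) (d::nat) (f::(nat\<Rightarrow>nat)\<Rightarrow>real).
     (\<forall>i<Suc k. finite (V i)) \<and> 1 \<le> d \<and> (\<forall>i<Suc k. d \<le> card (V i)) \<and> (\<forall>e. 0 \<le> f e \<and> f e \<le> 1) \<and>
     (\<Sum>e\<in>PiE {..<Suc k} V. f e) \<le> \<tau> * (\<Prod>i<Suc k. real (card (V i))) \<longrightarrow>
     measure_pmf.prob (Pi_pmf {..<Suc k} {} (\<lambda>i. pmf_of_set {S. S \<subseteq> V i \<and> card S = d}))
       {W. (\<Sum>e\<in>PiE {..<Suc k} W. f e) > lam * real d ^ Suc k} \<le> \<alpha> ^ d"
    proof (rule exI[of _ \<tau>1], intro conjI allI impI)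
      show "\<tau>1 > 0" by (rule t1)
      fix V :: "nat\<Rightarrow>nat set" and d :: nat and f :: "(nat\<Rightarrow>nat)\<Rightarrow>real"
      assume H: "(\<forall>i<Suc k. finite (V i)) \<and> 1 \<le> d \<and> (\<forall>i<Suc k. d \<le> card (V i)) \<and> (\<forall>e. 0 \<le> f e \<and> f e \<le> 1) \<and>
     (\<Sum>e\<in>PiE {..<Suc k} V. f e) \<le> \<tau>1 * (\<Prod>i<Suc k. real (card (V i)))"
      then have fV: "\<And>i. i < Suc k \<Longrightarrow> finite (V i)" and d1: "1 \<le> d"
        and dV: "\<And>i. i < Suc k \<Longrightarrow> d \<le> card (V i)" and f01: "\<And>e. 0 \<le> f e" "\<And>e. f e \<le> 1"
        and fsum: "(\<Sum>e\<in>PiE {..<Suc k} V. f e) \<le> \<tau>1 * (\<Prod>i<Suc k. real (card (V i)))" by auto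
      define P where "P = (\<lambda>i. pmf_of_set {S. S \<subseteq> V i \<and> card S = d})"
      define Pk where "Pk = Pi_pmf {..<k} {} P"
      define P' where "P' = (\<Prod>i<k. real (card (V i)))"
      define s where "s = (\<lambda>v. (\<Sum>e'\<in>PiE {..<k} V. f (e'(k:=v))) / P')"
      define B where "B = {y. (\<Sum>v\<in>y. s v) > \<tau>k * real d}"
      define Ev where "Ev = {W. (\<Sum>e\<in>PiE {..<Suc k} W. f e) > lam * real d ^ Suc k}"
      have c1: "\<And>i. i < k \<Longrightarrow> 1 \<le> card (V i)" using dV d1 le_trans less_SucI by blast
      have P'pos: "P' > 0" unfolding P'_def using c1
        by (intro prod_pos) (simp add: Suc_le_eq)
      have cPiE: "real (card (PiE {..<k} V)) = P'" unfolding P'_def by (simp add: card_PiE)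
      have decomp: "Pi_pmf {..<Suc k} {} P = bind_pmf (P k) (\<lambda>y. map_pmf (\<lambda>g. g(k:=y)) Pk)"
        using Pi_pmf_insert'[of "{..<k}" k "{}" P] by (simp add: lessThan_Suc Pk_def map_pmf_def)
      have fSk: "finite {S. S \<subseteq> V k \<and> card S = d}" using fV[of k] by (auto intro: finite_subset[of _ "Pow (V k)"])
      have neSk: "{S. S \<subseteq> V k \<and> card S = d} \<noteq> {}"
        using obtain_subset_with_card_n[OF dV[of k, OF lessI]] by blast
      have setPk: "set_pmf (P k) = {S. S \<subseteq> V k \<and> card S = d}"
        unfolding P_def using fSk neSk by simp
      have "measure_pmf.prob (Pi_pmf {..<Suc k} {} P) Ev \<le> measure_pmf.prob (P k) B + (\<alpha>/2)^d"
        unfolding decomp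
      proof (rule bind_bound)
        show "0 \<le> (\<alpha>/2)^d" using a by simp
        fix y assume y: "y \<in> set_pmf (P k)" "y \<notin> B"
        then have yV: "y \<subseteq> V k" and cy: "card y = d" using setPk by auto
        have fy: "finite y" using yV fV[of k] finite_subset by blast
        define F where "F = (\<lambda>e'. (\<Sum>v\<in>y. f (e'(k:=v))) / real d)"
        have dpos: "real d > 0" using d1 by simp
        have pre: "(\<lambda>g. g(k:=y)) -` Ev = {W. (\<Sum>e\<in>PiE {..<k} W. F e) > lam * real d ^ k}"
        proof -
          have "(\<Sum>e\<in>PiE {..<Suc k} (g(k:=y)). f e) = real d * (\<Sum>e\<in>PiE {..<k} g. F e)" for g
          proof -
            have "(\<Sum>e\<in>PiE {..<Suc k} (g(k:=y)). f e) = (\<Sum>v\<in>y. \<Sum>e'\<in>PiE {..<k} (g(k:=y)). f (e'(k:=v)))"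
              by (simp add: sum_PiE_Suc)
            also have "PiE {..<k} (g(k:=y)) = PiE {..<k} g" by (rule PiE_cong) auto
            also have "(\<Sum>v\<in>y. \<Sum>e'\<in>PiE {..<k} g. f (e'(k:=v))) = (\<Sum>e'\<in>PiE {..<k} g. \<Sum>v\<in>y. f (e'(k:=v)))"
              by (rule sum.swap)
            also have "\<dots> = (\<Sum>e'\<in>PiE {..<k} g. real d * F e')"
              unfolding F_def using dpos by simp
            also have "\<dots> = real d * (\<Sum>e\<in>PiE {..<k} g. F e)" by (simp add: sum_distrib_left)
            finally show ?thesis .
          qed
          then show ?thesis unfolding Ev_def using dpos by (auto simp: mult.assoc)
        qed
        have "measure_pmf.prob Pk {W. (\<Sum>e\<in>PiE {..<k} W. F e) > lam * real d ^ k} \<le> (\<alpha>/2) ^ d"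
          unfolding Pk_def P_def
        proof (rule IHk[rule_format], intro conjI allI impI)
          show "\<And>i. i < k \<Longrightarrow> finite (V i)" using fV by simp
          show "\<And>i. i < k \<Longrightarrow> d \<le> card (V i)" using dV by simp
          show "1 \<le> d" by (rule d1)
          fix e
          show "0 \<le> F e" unfolding F_def using f01 by (simp add: sum_nonneg)
          have "(\<Sum>v\<in>y. f (e(k:=v))) \<le> (\<Sum>v\<in>y. 1)" by (rule sum_mono) (use f01 in auto)
          then show "F e \<le> 1" unfolding F_def using cy dpos by simp
        next
          have "(\<Sum>e\<in>PiE {..<k} V. F e) = (\<Sum>e\<in>PiE {..<k} V. \<Sum>v\<in>y. f (e(k:=v))) / real d"
            unfolding F_def by (simp add: sum_divide_distrib)
          also have "\<dots> = (\<Sum>v\<in>y. \<Sum>e\<in>PiE {..<k} V. f (e(k:=v))) / real d"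
            by (subst sum.swap) simp
          also have "\<dots> = P' * (\<Sum>v\<in>y. s v) / real d"
            unfolding s_def sum_distrib_left using P'pos by simp
          also have "\<dots> \<le> P' * (\<tau>k * real d) / real d"
            using y(2) P'pos dpos unfolding B_def by (intro divide_right_mono mult_left_mono) auto
          also have "\<dots> = \<tau>k * P'" using dpos by simp
          finally show "(\<Sum>e\<in>PiE {..<k} V. F e) \<le> \<tau>k * (\<Prod>i<k. real (card (V i)))"
            unfolding P'_def .
        qed
        then show "measure_pmf.prob (map_pmf (\<lambda>g. g(k:=y)) Pk) Ev \<le> (\<alpha>/2)^d"
          by (simp add: pre)
      qed
      also have "measure_pmf.prob (P k) B \<le> (\<alpha>/2)^d"
        unfolding P_def B_def
      proof (rule L[rule_format], intro conjI allI)
        show "finite (V k)" using fV by simp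
        show "1 \<le> d" by (rule d1)
        show "d \<le> card (V k)" using dV by simp
        fix v
        show "0 \<le> s v" unfolding s_def using f01 P'pos by (simp add: sum_nonneg)
        have "(\<Sum>e'\<in>PiE {..<k} V. f (e'(k:=v))) \<le> (\<Sum>e'\<in>PiE {..<k} V. 1)"
          by (rule sum_mono) (use f01 in auto)
        then show "s v \<le> 1" unfolding s_def using P'pos cPiE by simp
      next
        have "(\<Sum>v\<in>V k. s v) = (\<Sum>e\<in>PiE {..<Suc k} V. f e) / P'"
          unfolding s_def by (simp add: sum_PiE_Suc sum_divide_distrib)
        also have "\<dots> \<le> \<tau>1 * (\<Prod>i<Suc k. real (card (V i))) / P'"
          using fsum P'pos by (simp add: divide_right_mono)
        also have "\<dots> = \<tau>1 * real (card (V k))"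
          using P'pos unfolding P'_def by (simp del: prod_pos_nat_iff of_nat_eq_0_iff prod_zero_iff)
        finally show "(\<Sum>v\<in>V k. s v) \<le> \<tau>1 * real (card (V k))" .
      qed
      finally have "measure_pmf.prob (Pi_pmf {..<Suc k} {} P) Ev \<le> 2 * (\<alpha>/2)^d" by simp
      also have "\<dots> \<le> \<alpha> ^ d"
      proof -
        have "2 * (\<alpha>/2)^d = \<alpha>^d * (2 / 2^d)" by (simp add: power_divide)
        also have "\<dots> \<le> \<alpha>^d * 1"
        proof (rule mult_left_mono)
          have "(2::real) ^ 1 \<le> 2 ^ d" using d1 by (intro power_increasing) auto
          then show "2 / 2^d \<le> (1::real)" by simp
        qed (use a in simp)
        finally show ?thesis by simp
      qed
      finally show "measure_pmf.prob (Pi_pmf {..<Suc k} {} (\<lambda>i. pmf_of_set {S. S \<subseteq> V i \<and> card S = d}))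
       {W. (\<Sum>e\<in>PiE {..<Suc k} W. f e) > lam * real d ^ Suc k} \<le> \<alpha> ^ d"
        unfolding P_def Ev_def .
    qed
  qed
qed

lemma sum_indic: "finite A \<Longrightarrow> (\<Sum>e\<in>A. if e \<in> H then 1 else 0 :: real) = real (card (A \<inter> H))"
  using sum.inter_filter[of A "\<lambda>_. 1::real" "\<lambda>e. e \<in> H"] by (simp add: Int_def)

theorem lemma3p6:
  fixes k :: nat and \<alpha> lam :: real
  assumes "k \<ge> 1" and "\<alpha> > 0" and "lam > 0"
  shows "\<exists>\<tau>>0. \<forall>(V :: nat \<Rightarrow> nat set) (d :: nat) (H :: (nat \<Rightarrow> nat) set).
           (\<forall>i<k. finite (V i)) \<and> 2 \<le> d \<and> (\<forall>i<k. d \<le> card (V i)) \<and>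
           H \<subseteq> PiE {..<k} V \<and>
           real (card H) \<le> \<tau> * (\<Prod>i<k. real (card (V i)))
           \<longrightarrow> measure_pmf.prob
                 (Pi_pmf {..<k} {} (\<lambda>i. pmf_of_set {S. S \<subseteq> V i \<and> card S = d}))
                 {W. real (card (H \<inter> PiE {..<k} W)) > lam * real d ^ k}
               \<le> \<alpha> ^ d"
proof -
  from G[of k, rule_format, OF assms(2) assms(3)] obtain \<tau> where t: "\<tau> > 0" and
    Gk: "\<forall>(V::nat\<Rightarrow>nat set) (d::nat) (f::(nat\<Rightarrow>nat)\<Rightarrow>real).
     (\<forall>i<k. finite (V i)) \<and> 1 \<le> d \<and> (\<forall>i<k. d \<le> card (V i)) \<and> (\<forall>e. 0 \<le> f e \<and> f e \<le> 1) \<and>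
     (\<Sum>e\<in>PiE {..<k} V. f e) \<le> \<tau> * (\<Prod>i<k. real (card (V i))) \<longrightarrow>
     measure_pmf.prob (Pi_pmf {..<k} {} (\<lambda>i. pmf_of_set {S. S \<subseteq> V i \<and> card S = d}))
       {W. (\<Sum>e\<in>PiE {..<k} W. f e) > lam * real d ^ k} \<le> \<alpha> ^ d"
    by blast
  show ?thesis
  proof (rule exI[of _ \<tau>], intro conjI allI impI)
    show "\<tau> > 0" by (rule t)
    fix V :: "nat \<Rightarrow> nat set" and d :: nat and H :: "(nat \<Rightarrow> nat) set"
    assume A: "(\<forall>i<k. finite (V i)) \<and> 2 \<le> d \<and> (\<forall>i<k. d \<le> card (V i)) \<and>
           H \<subseteq> PiE {..<k} V \<and> real (card H) \<le> \<tau> * (\<Prod>i<k. real (card (V i)))"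
    then have fV: "\<And>i. i < k \<Longrightarrow> finite (V i)" and d2: "2 \<le> d"
      and dV: "\<And>i. i < k \<Longrightarrow> d \<le> card (V i)" and HV: "H \<subseteq> PiE {..<k} V"
      and cH: "real (card H) \<le> \<tau> * (\<Prod>i<k. real (card (V i)))" by auto
    define f where "f = (\<lambda>e. if e \<in> H then 1 else 0 :: real)"
    define p where "p = Pi_pmf {..<k} {} (\<lambda>i. pmf_of_set {S. S \<subseteq> V i \<and> card S = d})"
    have fPV: "finite (PiE {..<k} V)" using fV by (intro finite_PiE) auto
    have sumV: "(\<Sum>e\<in>PiE {..<k} V. f e) = real (card H)"
      unfolding f_def using sum_indic[OF fPV, of H] HV by (simp add: Int_absorb1)
    have main: "measure_pmf.prob p {W. (\<Sum>e\<in>PiE {..<k} W. f e) > lam * real d ^ k} \<le> \<alpha> ^ d"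
      unfolding p_def
      by (rule Gk[rule_format]) (use fV d2 dV cH sumV in \<open>auto simp: f_def\<close>)
    have sub: "{W. real (card (H \<inter> PiE {..<k} W)) > lam * real d ^ k} \<inter> set_pmf p
               \<subseteq> {W. (\<Sum>e\<in>PiE {..<k} W. f e) > lam * real d ^ k}"
    proof safe
      fix W assume W1: "real (card (H \<inter> PiE {..<k} W)) > lam * real d ^ k" and W2: "W \<in> set_pmf p"
      have "W i \<subseteq> V i" if i: "i < k" for i
      proof -
        have fS: "finite {S. S \<subseteq> V i \<and> card S = d}" using fV[OF i] by (auto intro: finite_subset[of _ "Pow (V i)"])
        have neS: "{S. S \<subseteq> V i \<and> card S = d} \<noteq> {}"
          using obtain_subset_with_card_n[OF dV[OF i]] by blast
        have "W i \<in> set_pmf (pmf_of_set {S. S \<subseteq> V i \<and> card S = d})"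
          using W2 i unfolding p_def by (auto simp: set_Pi_pmf PiE_dflt_def)
        then show ?thesis using fS neS by simp
      qed
      then have "finite (W i)" if "i < k" for i using fV that finite_subset by blast
      then have fPW: "finite (PiE {..<k} W)" by (intro finite_PiE) auto
      have "(\<Sum>e\<in>PiE {..<k} W. f e) = real (card (H \<inter> PiE {..<k} W))"
        unfolding f_def using sum_indic[OF fPW, of H] by (simp add: Int_commute)
      then show "(\<Sum>e\<in>PiE {..<k} W. f e) > lam * real d ^ k" using W1 by simp
    qed
    have "measure_pmf.prob p {W. real (card (H \<inter> PiE {..<k} W)) > lam * real d ^ k}
        = measure_pmf.prob p ({W. real (card (H \<inter> PiE {..<k} W)) > lam * real d ^ k} \<inter> set_pmf p)"
      by (simp add: measure_Int_set_pmf)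
    also have "\<dots> \<le> measure_pmf.prob p {W. (\<Sum>e\<in>PiE {..<k} W. f e) > lam * real d ^ k}"
      by (rule measure_pmf.finite_measure_mono[OF sub]) simp
    also have "\<dots> \<le> \<alpha> ^ d" by (rule main)
    finally show "measure_pmf.prob (Pi_pmf {..<k} {} (\<lambda>i. pmf_of_set {S. S \<subseteq> V i \<and> card S = d}))
                 {W. real (card (H \<inter> PiE {..<k} W)) > lam * real d ^ k} \<le> \<alpha> ^ d"
      unfolding p_def .
  qed
qed

end
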